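(* Let $A\in M_N(\{0,1\})$ be primitive. The quantity $\tau(F_A)=\int F_A\,d\tau$ is independent of $\tau\in\mathcal M_{\sigma,e}$ if and only if there is a constant $c>0$ such that for every $n\in\mathbb N$ and every $\gamma=\gamma_1\cdots\gamma_n\in V_A^n$ with $A_{\gamma_n,\gamma_1}=1$, $$\frac1n\sum_{i=1}^nu_{\gamma_i}=c.$$ Moreover, this can happen only for $c=\sum_{i=1}^Np_iu_i$. Further, $F_A$ is constant if and only if all row-sums of $A$ are equal.
   Context: $A\in M_N(\{0,1\})$ primitive; $V_A^n$ is the set of words $\gamma_1\cdots\gamma_n$ over $\{1,\dots,N\}$ with $A_{\gamma_k,\gamma_{k+1}}=1$ for all $k$; $\Omega_A=\{x\in\{1,\dots,N\}^{\mathbb N}:A_{x_n,x_{n+1}}=1\ \forall n\}$ with left shift $\sigma$. $\mathcal M_{\sigma,e}$ denotes the set of $\sigma$-invariant ergodic Borel probability measures on $\Omega_A$. $\lambda_A$ is the Perron–Frobenius eigenvalue, $u>0$ with $Au=\lambda_Au$, $\sum u_i=1$, $v>0$ with $A^Tv=\lambda_Av$, $\sum u_iv_i=1$, $p_i=u_iv_i$, $P_{i,j}=A_{i,j}u_j/(\lambda_Au_i)$, and $F_A(x)=u_{x_1}(1-P_{x_1,x_2})$. *)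

theory Defs
  imports "HOL-Analysis.Analysis" "HOL-Probability.Probability"
begin

(* Matrices A in M_N({0,1}) are functions nat => nat => real, indices in {1..N}. *)

fun mpow :: "nat \<Rightarrow> (nat \<Rightarrow> nat \<Rightarrow> real) \<Rightarrow> nat \<Rightarrow> nat \<Rightarrow> nat \<Rightarrow> real" where
  "mpow N A 0 i j = (if i = j then 1 else 0)"
| "mpow N A (Suc k) i j = (\<Sum>l\<in>{1..N}. mpow N A k i l * A l j)"

definition zero_one_matrix :: "nat \<Rightarrow> (nat \<Rightarrow> nat \<Rightarrow> real) \<Rightarrow> bool" where
  "zero_one_matrix N A \<longleftrightarrow> (\<forall>i\<in>{1..N}. \<forall>j\<in>{1..N}. A i j = 0 \<or> A i j = 1)"

definition primitive :: "nat \<Rightarrow> (nat \<Rightarrow> nat \<Rightarrow> real) \<Rightarrow> bool" where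
  "primitive N A \<longleftrightarrow> (\<exists>k>0. \<forall>i\<in>{1..N}. \<forall>j\<in>{1..N}. mpow N A k i j > 0)"

(* V_A^n: admissible words gamma_1 ... gamma_n, stored as lists (index shifted by one) *)
definition words :: "nat \<Rightarrow> (nat \<Rightarrow> nat \<Rightarrow> real) \<Rightarrow> nat \<Rightarrow> nat list set" where
  "words N A n = {\<gamma>. length \<gamma> = n \<and> set \<gamma> \<subseteq> {1..N} \<and>
                     (\<forall>k. Suc k < n \<longrightarrow> A (\<gamma> ! k) (\<gamma> ! Suc k) = 1)}"

(* Omega_A, sequences indexed from 0 *)
definition Omega :: "nat \<Rightarrow> (nat \<Rightarrow> nat \<Rightarrow> real) \<Rightarrow> (nat \<Rightarrow> nat) set" where
  "Omega N A = {x. (\<forall>n. x n \<in> {1..N}) \<and> (\<forall>n. A (x n) (x (Suc n)) = 1)}"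

definition shift :: "(nat \<Rightarrow> nat) \<Rightarrow> (nat \<Rightarrow> nat)" where
  "shift x = (\<lambda>n. x (Suc n))"

(* Borel sigma-algebra of Omega_A (subspace of the product of discrete spaces) *)
definition Omega_borel :: "nat \<Rightarrow> (nat \<Rightarrow> nat \<Rightarrow> real) \<Rightarrow> (nat \<Rightarrow> nat) measure" where
  "Omega_borel N A = restrict_space borel (Omega N A)"

definition inv_erg_measures :: "nat \<Rightarrow> (nat \<Rightarrow> nat \<Rightarrow> real) \<Rightarrow> (nat \<Rightarrow> nat) measure set" where
  "inv_erg_measures N A = {\<tau>. sets \<tau> = sets (Omega_borel N A) \<and> prob_space \<tau> \<and>
      (\<forall>B\<in>sets \<tau>. emeasure \<tau> (shift -` B \<inter> space \<tau>) = emeasure \<tau> B) \<and>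
      (\<forall>B\<in>sets \<tau>. shift -` B \<inter> space \<tau> = B \<longrightarrow> measure \<tau> B = 0 \<or> measure \<tau> B = 1)}"

definition Pmat :: "(nat \<Rightarrow> nat \<Rightarrow> real) \<Rightarrow> real \<Rightarrow> (nat \<Rightarrow> real) \<Rightarrow> nat \<Rightarrow> nat \<Rightarrow> real" where
  "Pmat A lam u i j = A i j * u j / (lam * u i)"

definition F_A :: "(nat \<Rightarrow> nat \<Rightarrow> real) \<Rightarrow> real \<Rightarrow> (nat \<Rightarrow> real) \<Rightarrow> (nat \<Rightarrow> nat) \<Rightarrow> real" where
  "F_A A lam u x = u (x 0) * (1 - Pmat A lam u (x 0) (x 1))"

definition cycle_avg_const :: "nat \<Rightarrow> (nat \<Rightarrow> nat \<Rightarrow> real) \<Rightarrow> (nat \<Rightarrow> real) \<Rightarrow> real \<Rightarrow> bool" where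
  "cycle_avg_const N A u c \<longleftrightarrow>
     (\<forall>n\<ge>1. \<forall>\<gamma>\<in>words N A n. A (last \<gamma>) (hd \<gamma>) = 1 \<longrightarrow>
        (1 / real n) * (\<Sum>i<n. u (\<gamma> ! i)) = c)"

end

theory Submission
  imports Defs
begin

lemma coord_meas_borel: "(\<lambda>x::nat\<Rightarrow>nat. (f::nat\<Rightarrow>real) (x n)) \<in> borel_measurable borel"
  apply (rule borel_measurable_continuous_onI)
  apply (rule continuous_on_compose2[of UNIV f UNIV "\<lambda>x. x n"])
  by auto

lemma coord_meas: "(\<lambda>x::nat\<Rightarrow>nat. (f::nat\<Rightarrow>real) (x n)) \<in> borel_measurable (Omega_borel N A)"
  unfolding Omega_borel_def by (rule measurable_restrict_space1[OF coord_meas_borel])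

lemma shift_meas: "shift \<in> measurable (Omega_borel N A) (Omega_borel N A)"
proof -
  have "continuous_on UNIV shift" unfolding shift_def
    by (intro continuous_on_coordinatewise_then_product) simp
  hence "shift \<in> measurable borel borel" by (rule borel_measurable_continuous_onI)
  moreover have "shift \<in> space (restrict_space borel (Omega N A)) \<rightarrow> Omega N A"
    by (auto simp: space_restrict_space Omega_def shift_def)
  ultimately show ?thesis unfolding Omega_borel_def
    by (intro measurable_restrict_space2 measurable_restrict_space1)
qed

lemma space_Ob: "space (Omega_borel N A) = Omega N A"
  by (simp add: Omega_borel_def space_restrict_space)

lemma coord_set: "{x\<in>Omega N A. x n = i} \<in> sets (Omega_borel N A)"
proof -
  have "{x\<in>Omega N A. x n = i} = (\<lambda>x. (\<lambda>k. real k) (x n)) -` {real i} \<inter> space (Omega_borel N A)"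
    by (auto simp: space_Ob)
  also have "\<dots> \<in> sets (Omega_borel N A)"
    by (rule measurable_sets[OF coord_meas]) simp
  finally show ?thesis .
qed

lemma iem_sets: "\<tau> \<in> inv_erg_measures N A \<Longrightarrow> sets \<tau> = sets (Omega_borel N A)"
  unfolding inv_erg_measures_def by auto

lemma iem_space: "\<tau> \<in> inv_erg_measures N A \<Longrightarrow> space \<tau> = Omega N A"
  using sets_eq_imp_space_eq[OF iem_sets] space_Ob by simp

lemma iem_prob: "\<tau> \<in> inv_erg_measures N A \<Longrightarrow> prob_space \<tau>"
  unfolding inv_erg_measures_def by auto

lemma coord_integral:
  assumes t: "\<tau> \<in> inv_erg_measures N A"
  shows "integrable \<tau> (\<lambda>x. (f::nat\<Rightarrow>real) (x n)) \<and>
    (\<integral>x. f (x n) \<partial>\<tau>) = (\<Sum>i\<in>{1..N}. f i * measure \<tau> {x\<in>Omega N A. x n = i})"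
proof -
  interpret prob_space \<tau> using iem_prob[OF t] .
  have sp: "space \<tau> = Omega N A" using iem_space[OF t] .
  have S: "\<And>i. {x\<in>Omega N A. x n = i} \<in> sets \<tau>" unfolding iem_sets[OF t] by (rule coord_set)
  have eq: "\<And>x. x \<in> space \<tau> \<Longrightarrow> f (x n) = (\<Sum>i\<in>{1..N}. f i * indicator {x\<in>Omega N A. x n = i} x)"
  proof -
    fix x assume "x \<in> space \<tau>"
    hence xO: "x \<in> Omega N A" and xn: "x n \<in> {1..N}" using sp by (auto simp: Omega_def)
    have "(\<Sum>i\<in>{1..N}. f i * indicator {x\<in>Omega N A. x n = i} x) = (\<Sum>i\<in>{1..N}. if i = x n then f i else 0)"
      by (intro sum.cong) (auto simp: indicator_def xO)
    also have "\<dots> = f (x n)" using xn by simp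
    finally show "f (x n) = (\<Sum>i\<in>{1..N}. f i * indicator {x\<in>Omega N A. x n = i} x)" by simp
  qed
  have ind: "\<And>i. integrable \<tau> (\<lambda>x. indicator {x\<in>Omega N A. x n = i} x :: real)"
    by (rule integrable_real_indicator[OF S]) (simp add: emeasure_eq_measure)
  have int: "integrable \<tau> (\<lambda>x. \<Sum>i\<in>{1..N}. f i * indicator {x\<in>Omega N A. x n = i} x)"
    by (rule Bochner_Integration.integrable_sum, rule integrable_mult_right, rule ind)
  have "integrable \<tau> (\<lambda>x. f (x n)) \<longleftrightarrow> integrable \<tau> (\<lambda>x. \<Sum>i\<in>{1..N}. f i * indicator {x\<in>Omega N A. x n = i} x)"
    by (rule Bochner_Integration.integrable_cong[OF refl]) (rule eq)
  hence I: "integrable \<tau> (\<lambda>x. f (x n))" using int by blast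
  have "(\<integral>x. f (x n) \<partial>\<tau>) = (\<integral>x. (\<Sum>i\<in>{1..N}. f i * indicator {x\<in>Omega N A. x n = i} x) \<partial>\<tau>)"
    by (rule Bochner_Integration.integral_cong[OF refl]) (rule eq)
  also have "\<dots> = (\<Sum>i\<in>{1..N}. (\<integral>x. f i * indicator {x\<in>Omega N A. x n = i} x \<partial>\<tau>))"
    by (rule Bochner_Integration.integral_sum, rule integrable_mult_right, rule ind)
  also have "\<dots> = (\<Sum>i\<in>{1..N}. f i * measure \<tau> {x\<in>Omega N A. x n = i})"
  proof (rule sum.cong[OF refl])
    fix i
    have e1: "integral\<^sup>L \<tau> (indicator {x\<in>Omega N A. x n = i} :: _ \<Rightarrow> real) = measure \<tau> ({x\<in>Omega N A. x n = i} \<inter> space \<tau>)"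
      by (rule Bochner_Integration.integral_indicator)
    have e2: "{x\<in>Omega N A. x n = i} \<inter> space \<tau> = {x\<in>Omega N A. x n = i}" using sp by auto
    show "(\<integral>x. f i * indicator {x\<in>Omega N A. x n = i} x \<partial>\<tau>) = f i * measure \<tau> {x\<in>Omega N A. x n = i}"
      unfolding Bochner_Integration.integral_mult_right_zero e1 e2 ..
  qed
  finally show ?thesis using I by blast
qed

lemma coord_measure_shift:
  assumes t: "\<tau> \<in> inv_erg_measures N A"
  shows "measure \<tau> {x\<in>Omega N A. x (Suc n) = i} = measure \<tau> {x\<in>Omega N A. x n = i}"
proof -
  have sp: "space \<tau> = Omega N A" using iem_space[OF t] .
  have S: "{x\<in>Omega N A. x n = i} \<in> sets \<tau>" unfolding iem_sets[OF t] by (rule coord_set)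
  have "emeasure \<tau> (shift -` {x\<in>Omega N A. x n = i} \<inter> space \<tau>) = emeasure \<tau> {x\<in>Omega N A. x n = i}"
    using t S unfolding inv_erg_measures_def by blast
  moreover have "shift -` {x\<in>Omega N A. x n = i} \<inter> space \<tau> = {x\<in>Omega N A. x (Suc n) = i}"
    by (auto simp: sp shift_def Omega_def)
  ultimately show ?thesis by (simp add: measure_def)
qed

lemma coord_integral_shift:
  assumes t: "\<tau> \<in> inv_erg_measures N A"
  shows "(\<integral>x. (f::nat\<Rightarrow>real) (x (Suc n)) \<partial>\<tau>) = (\<integral>x. f (x n) \<partial>\<tau>)"
proof -
  have "(\<integral>x. f (x (Suc n)) \<partial>\<tau>) = (\<Sum>i\<in>{1..N}. f i * measure \<tau> {x\<in>Omega N A. x (Suc n) = i})"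
    by (rule conjunct2[OF coord_integral[OF t]])
  also have "\<dots> = (\<Sum>i\<in>{1..N}. f i * measure \<tau> {x\<in>Omega N A. x n = i})"
    by (rule sum.cong[OF refl]) (simp only: coord_measure_shift[OF t])
  also have "\<dots> = (\<integral>x. f (x n) \<partial>\<tau>)"
    by (rule sym, rule conjunct2[OF coord_integral[OF t]])
  finally show ?thesis .
qed

fun walk :: "nat \<Rightarrow> (nat \<Rightarrow> nat \<Rightarrow> real) \<Rightarrow> nat list \<Rightarrow> bool" where
  "walk N A [] = False"
| "walk N A [a] = (a \<in> {1..N})"
| "walk N A (a # b # w) = (a \<in> {1..N} \<and> A a b = 1 \<and> walk N A (b # w))"

lemma walk_words: "walk N A w \<Longrightarrow> w \<in> words N A (length w)"
proof (induction w rule: induct_list012)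
  case (3 a b w)
  then show ?case
    by (auto simp: words_def nth_Cons split: nat.splits)
qed (auto simp: words_def)

lemma words_walk: "n \<ge> 1 \<Longrightarrow> w \<in> words N A n \<Longrightarrow> walk N A w"
proof (induction w arbitrary: n rule: induct_list012)
  case (3 a b w)
  have W: "a # b # w \<in> words N A n" using 3 by simp
  have "\<forall>k. Suc k < Suc (length w) \<longrightarrow> A ((b#w)!k) ((b#w)!Suc k) = 1"
  proof (intro allI impI)
    fix k assume "Suc k < Suc (length w)"
    hence "Suc (Suc k) < n" using W by (simp add: words_def)
    hence "A ((a#b#w)!Suc k) ((a#b#w)!Suc(Suc k)) = 1" using W unfolding words_def by blast
    thus "A ((b#w)!k) ((b#w)!Suc k) = 1" by simp
  qed
  hence "b # w \<in> words N A (Suc (length w))"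
    using W unfolding words_def by auto
  hence "walk N A (b # w)" using 3 by auto
  moreover have "A a b = 1" using W unfolding words_def by force
  ultimately show ?case using W by (auto simp: words_def)
qed (auto simp: words_def)

lemma walk_append:
  "xs \<noteq> [] \<Longrightarrow> ys \<noteq> [] \<Longrightarrow> walk N A (xs @ ys) \<longleftrightarrow> walk N A xs \<and> walk N A ys \<and> A (last xs) (hd ys) = 1"
proof (induction xs)
  case Nil then show ?case by simp
next
  case (Cons a xs)
  show ?case
  proof (cases xs)
    case Nil
    then show ?thesis using Cons by (cases ys) auto
  next
    case (Cons b xs')
    then show ?thesis using Cons.IH Cons.prems by auto
  qed
qed

lemma walk_snoc:
  "xs \<noteq> [] \<Longrightarrow> walk N A (xs @ [y]) \<longleftrightarrow> walk N A xs \<and> y \<in> {1..N} \<and> A (last xs) y = 1"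
  by (subst walk_append) auto

lemma walk_set: "walk N A w \<Longrightarrow> set w \<subseteq> {1..N}"
  by (induction w rule: walk.induct) auto

lemma walk_ne: "walk N A w \<Longrightarrow> w \<noteq> []"
  by auto

lemma walk_hd: "walk N A w \<Longrightarrow> hd w \<in> {1..N}"
  using walk_set walk_ne hd_in_set by blast

lemma walk_last: "walk N A w \<Longrightarrow> last w \<in> {1..N}"
  using walk_set walk_ne last_in_set by blast

lemma walk_prop:
  assumes "walk N A w" "P (hd w)"
    and "\<And>i j. i \<in> {1..N} \<Longrightarrow> j \<in> {1..N} \<Longrightarrow> A i j = 1 \<Longrightarrow> P i \<Longrightarrow> P j"
  shows "P (last w)"
  using assms
proof (induction w rule: induct_list012)
  case (3 a b w)
  have "walk N A (b # w)" "A a b = 1" "a \<in> {1..N}" using 3 by auto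
  moreover have "b \<in> {1..N}" using walk_hd[OF calculation(1)] by simp
  ultimately have "P b" using 3 by auto
  thus ?case using 3 \<open>walk N A (b # w)\<close> by auto
qed auto

lemma walk_iter:
  assumes "walk N A w"
    and "\<And>i j. i \<in> {1..N} \<Longrightarrow> j \<in> {1..N} \<Longrightarrow> A i j = 1 \<Longrightarrow> g j = T (g i)"
  shows "g (last w) = (T ^^ (length w - 1)) (g (hd w))"
  using assms
proof (induction w rule: induct_list012)
  case (3 a b w)
  have wb: "walk N A (b # w)" "A a b = 1" "a \<in> {1..N}" using 3 by auto
  have b: "b \<in> {1..N}" using walk_hd[OF wb(1)] by simp
  have "g (last (a # b # w)) = (T ^^ (length (b # w) - 1)) (g b)" using 3 wb by auto
  also have "g b = T (g a)" using 3 wb b by auto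
  finally show ?case by (simp add: funpow_swap1)
qed auto

lemma mpow_nonneg:
  assumes "zero_one_matrix N A" "j \<in> {1..N}"
  shows "mpow N A k i j \<ge> 0"
  using assms(2)
proof (induction k arbitrary: j)
  case (Suc k)
  have "\<And>l. l \<in> {1..N} \<Longrightarrow> A l j \<ge> 0"
  proof -
    fix l assume "l \<in> {1..N}"
    hence "A l j = 0 \<or> A l j = 1" using assms(1) Suc.prems unfolding zero_one_matrix_def by blast
    thus "A l j \<ge> 0" by auto
  qed
  then show ?case using Suc.IH by (auto intro!: sum_nonneg)
qed simp

lemma mpow_walk:
  assumes A01: "zero_one_matrix N A" and "i \<in> {1..N}" "j \<in> {1..N}" "mpow N A k i j > 0"
  shows "\<exists>w. walk N A w \<and> hd w = i \<and> last w = j \<and> length w = Suc k"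
  using assms(3,4)
proof (induction k arbitrary: j)
  case 0
  then show ?case using assms(2) by (intro exI[of _ "[i]"]) (auto split: if_splits)
next
  case (Suc k)
  have "\<exists>l\<in>{1..N}. mpow N A k i l * A l j > 0"
  proof (rule ccontr)
    assume "\<not> ?thesis"
    hence "(\<Sum>l\<in>{1..N}. mpow N A k i l * A l j) \<le> 0" by (intro sum_nonpos) (force simp: not_less)
    thus False using Suc.prems by simp
  qed
  then obtain l where l: "l \<in> {1..N}" "mpow N A k i l * A l j > 0" by blast
  have "A l j = 0 \<or> A l j = 1" using A01 l(1) Suc.prems unfolding zero_one_matrix_def by blast
  hence Alj: "A l j = 1" using l by auto
  hence "mpow N A k i l > 0" using l by simp
  then obtain w where w: "walk N A w" "hd w = i" "last w = l" "length w = Suc k"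
    using Suc.IH l(1) by blast
  show ?case using w Alj Suc.prems walk_ne[OF w(1)]
    by (intro exI[of _ "w @ [j]"]) (auto simp: walk_snoc hd_append)
qed

lemma walks_exist:
  assumes "zero_one_matrix N A" "primitive N A"
  shows "\<exists>k>0. \<forall>i\<in>{1..N}. \<forall>j\<in>{1..N}. \<exists>w. walk N A w \<and> hd w = i \<and> last w = j \<and> length w = Suc k"
  using assms mpow_walk unfolding primitive_def by metis

lemma closed_walk_edge:
  assumes "walk N A w" "A (last w) (hd w) = 1" "a < length w"
  shows "A (w ! a) (w ! (Suc a mod length w)) = 1"
proof (cases "Suc a < length w")
  case True
  then show ?thesis using walk_words[OF assms(1)] by (auto simp: words_def)
next
  case False
  hence "Suc a = length w" using assms(3) by simp
  moreover have "w ! a = last w" using calculation walk_ne[OF assms(1)] by (metis diff_Suc_1 last_conv_nth)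
  moreover have "w ! 0 = hd w" using walk_ne[OF assms(1)] by (simp add: hd_conv_nth)
  ultimately show ?thesis using assms(2) by simp
qed

lemma potential:
  assumes A01: "zero_one_matrix N A" and prim: "primitive N A"
    and c: "cycle_avg_const N A u c" and N1: "1 \<le> N"
  shows "\<exists>h. \<forall>i\<in>{1..N}. \<forall>j\<in>{1..N}. A i j = 1 \<longrightarrow> u i - c = h j - h i"
proof -
  define g where "g x = u x - c" for x
  define W where "W w = sum_list (map g (butlast w))" for w
  have cyc0: "sum_list (map g w) = 0" if w: "walk N A w" "A (last w) (hd w) = 1" for w
  proof -
    define n where "n = length w"
    have n1: "n \<ge> 1" using walk_ne[OF w(1)] by (cases w) (auto simp: n_def)
    have "(1 / real n) * (\<Sum>i<n. u (w ! i)) = c"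
      using c n1 walk_words[OF w(1)] w(2) unfolding cycle_avg_const_def n_def by blast
    hence S: "(\<Sum>i<n. u (w ! i)) = real n * c" using n1 by (auto simp: field_simps)
    have "sum_list (map g w) = (\<Sum>i<n. g (w ! i))"
      by (simp add: sum_list_sum_nth atLeast0LessThan n_def)
    also have "\<dots> = (\<Sum>i<n. u (w ! i)) - real n * c" by (simp add: g_def sum_subtractf)
    finally show ?thesis using S by simp
  qed
  have hdb: "hd (butlast w) = hd w" if "length w \<ge> 2" for w :: "nat list"
    using that by (cases w; cases "tl w") auto
  have snoc: "walk N A (butlast w) \<and> A (last (butlast w)) (last w) = 1" if "walk N A w" "length w \<ge> 2" for w
  proof -
    have "butlast w \<noteq> []" using that by (cases w) auto
    moreover have "w = butlast w @ [last w]" using walk_ne[OF that(1)] by simp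
    ultimately show ?thesis using that(1) walk_snoc by metis
  qed
  have cyc2: "W p + W s = 0" if p: "walk N A p" "length p \<ge> 2" and s: "walk N A s" "length s \<ge> 2"
     and ps: "last p = hd s" "last s = hd p" for p s
  proof -
    define x where "x = butlast p @ butlast s"
    have bp: "butlast p \<noteq> []" "butlast s \<noteq> []" using p s by (cases p; cases s; auto)+
    have "walk N A x" unfolding x_def using snoc[OF p] snoc[OF s] bp hdb[OF s(2)] ps(1)
      by (subst walk_append) auto
    moreover have "A (last x) (hd x) = 1" unfolding x_def using snoc[OF s] bp hdb[OF p(2)] ps(2)
      by simp
    ultimately have "sum_list (map g x) = 0" by (rule cyc0)
    thus ?thesis by (simp add: x_def W_def)
  qed
  obtain k where k: "k > 0" and wk: "\<And>i j. i\<in>{1..N} \<Longrightarrow> j\<in>{1..N} \<Longrightarrow>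
      \<exists>w. walk N A w \<and> hd w = i \<and> last w = j \<and> length w = Suc k"
    using walks_exist[OF A01 prim] by metis
  have one: "1 \<in> {1..N}" using N1 by simp
  define R where "R j = (SOME w. walk N A w \<and> hd w = j \<and> last w = 1 \<and> length w = Suc k)" for j
  define Q where "Q j = (SOME w. walk N A w \<and> hd w = 1 \<and> last w = j \<and> length w = Suc k)" for j
  have R: "walk N A (R j) \<and> hd (R j) = j \<and> last (R j) = 1 \<and> length (R j) = Suc k" if "j \<in> {1..N}" for j
    unfolding R_def using someI_ex[OF wk[OF that one]] .
  have Q: "walk N A (Q j) \<and> hd (Q j) = 1 \<and> last (Q j) = j \<and> length (Q j) = Suc k" if "j \<in> {1..N}" for j
    unfolding Q_def using someI_ex[OF wk[OF one that]] .
  show ?thesis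
  proof (intro exI[of _ "\<lambda>j. - W (R j)"] ballI impI)
    fix i j assume i: "i \<in> {1..N}" and j: "j \<in> {1..N}" and e: "A i j = 1"
    define p where "p = i # R j"
    have Rj: "R j \<noteq> []" using R[OF j] by auto
    have wp: "walk N A p" unfolding p_def using R[OF j] e i Rj walk_append[of "[i]" "R j"] by auto
    have lp: "length p \<ge> 2" using R[OF j] k by (simp add: p_def)
    have "W p + W (Q i) = 0" using cyc2[OF wp lp, of "Q i"] Q[OF i] R[OF j] k Rj
      by (auto simp: p_def)
    moreover have "W (R i) + W (Q i) = 0" using cyc2[of "R i" "Q i"] Q[OF i] R[OF i] k by auto
    moreover have "W p = g i + W (R j)" using Rj by (simp add: p_def W_def)
    ultimately show "u i - c = - W (R j) - - W (R i)" by (simp add: g_def)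
  qed
qed

lemma part2:
  assumes A01: "zero_one_matrix N A"
    and h: "\<forall>i\<in>{1..N}. \<forall>j\<in>{1..N}. A i j = 1 \<longrightarrow> u i - c = h j - h i"
    and lam_pos: "lam > 0"
    and u_eig: "\<forall>i\<in>{1..N}. (\<Sum>j\<in>{1..N}. A i j * u j) = lam * u i"
    and v_eig: "\<forall>j\<in>{1..N}. (\<Sum>i\<in>{1..N}. A i j * v i) = lam * v j"
    and uv_norm: "(\<Sum>i\<in>{1..N}. u i * v i) = 1"
  shows "c = (\<Sum>i\<in>{1..N}. (u i * v i) * u i)"
proof -
  have key: "A i j * u j * v i * (u i - c) = A i j * u j * v i * (h j - h i)"
    if "i \<in> {1..N}" "j \<in> {1..N}" for i j
  proof -
    have "A i j = 0 \<or> A i j = 1" using A01 that unfolding zero_one_matrix_def by blast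
    thus ?thesis using h that by auto
  qed
  have L: "(\<Sum>i\<in>{1..N}. \<Sum>j\<in>{1..N}. A i j * u j * v i * (u i - c))
      = lam * ((\<Sum>i\<in>{1..N}. (u i * v i) * u i) - c)"
  proof -
    have "(\<Sum>i\<in>{1..N}. \<Sum>j\<in>{1..N}. A i j * u j * v i * (u i - c))
        = (\<Sum>i\<in>{1..N}. (v i * (u i - c)) * (\<Sum>j\<in>{1..N}. A i j * u j))"
      by (simp add: sum_distrib_left mult_ac)
    also have "\<dots> = (\<Sum>i\<in>{1..N}. lam * ((u i * v i) * u i - c * (u i * v i)))"
      using u_eig by (intro sum.cong) (auto simp: algebra_simps)
    also have "\<dots> = lam * ((\<Sum>i\<in>{1..N}. (u i * v i) * u i) - c * (\<Sum>i\<in>{1..N}. u i * v i))"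
      by (simp add: sum_distrib_left[symmetric] sum_subtractf)
    finally show ?thesis using uv_norm by simp
  qed
  have RR: "(\<Sum>i\<in>{1..N}. \<Sum>j\<in>{1..N}. A i j * u j * v i * (h j - h i)) = 0"
  proof -
    have "(\<Sum>i\<in>{1..N}. \<Sum>j\<in>{1..N}. A i j * u j * v i * (h j - h i))
       = (\<Sum>i\<in>{1..N}. \<Sum>j\<in>{1..N}. A i j * v i * (u j * h j) - A i j * u j * (v i * h i))"
      by (intro sum.cong refl) (simp add: algebra_simps)
    also have "\<dots> = (\<Sum>i\<in>{1..N}. \<Sum>j\<in>{1..N}. A i j * v i * (u j * h j)) - (\<Sum>i\<in>{1..N}. \<Sum>j\<in>{1..N}. A i j * u j * (v i * h i))"
      by (simp only: sum_subtractf)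
    also have "(\<Sum>i\<in>{1..N}. \<Sum>j\<in>{1..N}. A i j * v i * (u j * h j)) = (\<Sum>j\<in>{1..N}. (u j * h j) * (\<Sum>i\<in>{1..N}. A i j * v i))"
      by (subst sum.swap) (simp add: sum_distrib_left mult_ac)
    also have "\<dots> = (\<Sum>j\<in>{1..N}. lam * (u j * v j * h j))"
      using v_eig by (intro sum.cong) auto
    also have "(\<Sum>i\<in>{1..N}. \<Sum>j\<in>{1..N}. A i j * u j * (v i * h i)) = (\<Sum>i\<in>{1..N}. (v i * h i) * (\<Sum>j\<in>{1..N}. A i j * u j))"
      by (simp add: sum_distrib_left mult_ac)
    also have "\<dots> = (\<Sum>i\<in>{1..N}. lam * (u i * v i * h i))"
      using u_eig by (intro sum.cong) auto
    finally show ?thesis by simp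
  qed
  have "(\<Sum>i\<in>{1..N}. \<Sum>j\<in>{1..N}. A i j * u j * v i * (u i - c)) = (\<Sum>i\<in>{1..N}. \<Sum>j\<in>{1..N}. A i j * u j * v i * (h j - h i))"
    by (intro sum.cong refl) (simp add: key)
  hence "lam * ((\<Sum>i\<in>{1..N}. (u i * v i) * u i) - c) = 0"
    using L RR by simp
  thus ?thesis using lam_pos by simp
qed

lemma sum_rot:
  fixes g :: "nat \<Rightarrow> real"
  assumes "g n = g 0"
  shows "(\<Sum>k<n. g (Suc k)) = (\<Sum>k<n. g k)"
proof -
  have "(\<Sum>k<Suc n. g k) = g 0 + (\<Sum>k<n. g (Suc k))" by (rule sum.lessThan_Suc_shift)
  moreover have "(\<Sum>k<Suc n. g k) = (\<Sum>k<n. g k) + g n" by simp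
  ultimately show ?thesis using assms by simp
qed

lemma periodic_measure:
  assumes w: "walk N A w" "A (last w) (hd w) = 1"
  shows "\<exists>\<tau>\<in>inv_erg_measures N A. (\<integral>x. (u::nat\<Rightarrow>real) (x 0) \<partial>\<tau>) = (\<Sum>i<length w. u (w ! i)) / real (length w)"
proof -
  define n where "n = length w"
  have n0: "n > 0" using walk_ne[OF w(1)] by (simp add: n_def)
  define xp where "xp k = (\<lambda>m. w ! ((k + m) mod n))" for k
  have xpO: "xp k \<in> Omega N A" for k
  proof -
    have "w ! ((k + m) mod n) \<in> {1..N}" for m
    proof -
      have "(k + m) mod n < length w" using n0 by (simp add: n_def)
      hence "w ! ((k + m) mod n) \<in> set w" by (rule nth_mem)
      thus ?thesis using walk_set[OF w(1)] by blast
    qed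
    moreover have "A (w ! ((k + m) mod n)) (w ! ((k + Suc m) mod n)) = 1" for m
    proof -
      have a: "(k + m) mod n < length w" using n0 by (simp add: n_def)
      have "(k + Suc m) mod n = Suc ((k + m) mod n) mod n" by (simp add: mod_Suc_eq)
      thus ?thesis using closed_walk_edge[OF w a] by (simp add: n_def)
    qed
    ultimately show ?thesis by (auto simp: Omega_def xp_def)
  qed
  have shift_xp: "shift (xp k) = xp (Suc k)" for k
    by (simp add: shift_def xp_def)
  have xp_n: "xp n = xp 0" by (simp add: xp_def fun_eq_iff mod_add_left_eq[symmetric, of n n])
  define M where "M = measure_pmf (pmf_of_set {..<n})"
  have fin: "finite {..<n}" "{..<n} \<noteq> {}" using n0 by auto
  define \<tau> where "\<tau> = distr M (Omega_borel N A) xp"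
  have meas: "xp \<in> measurable M (Omega_borel N A)"
    using xpO by (simp add: M_def space_Ob)
  have sets\<tau>: "sets \<tau> = sets (Omega_borel N A)" by (simp add: \<tau>_def)
  have sp\<tau>: "space \<tau> = Omega N A" by (simp add: \<tau>_def space_Ob)
  have prob: "prob_space \<tau>" unfolding \<tau>_def M_def
    by (rule prob_space.prob_space_distr[OF prob_space_measure_pmf]) (use meas in \<open>simp add: M_def\<close>)
  have meas_eq: "measure \<tau> B = (\<Sum>k<n. of_bool (xp k \<in> B)) / real n" if B: "B \<in> sets (Omega_borel N A)" for B
  proof -
    have "measure \<tau> B = measure M (xp -` B \<inter> space M)" unfolding \<tau>_def by (rule measure_distr[OF meas B])
    also have "\<dots> = real (card ({..<n} \<inter> (xp -` B \<inter> space M))) / real (card {..<n})"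
      unfolding M_def by (rule measure_pmf_of_set[OF fin(2) fin(1)])
    also have "card ({..<n} \<inter> (xp -` B \<inter> space M)) = card ({..<n} \<inter> {k. xp k \<in> B})"
      by (rule arg_cong[where f=card]) (auto simp: M_def)
    also have "real \<dots> = (\<Sum>k<n. of_bool (xp k \<in> B))" by simp
    finally show ?thesis by simp
  qed
  have inv: "emeasure \<tau> (shift -` B \<inter> space \<tau>) = emeasure \<tau> B" if B: "B \<in> sets \<tau>" for B
  proof -
    have B': "B \<in> sets (Omega_borel N A)" using B sets\<tau> by simp
    have SB: "shift -` B \<inter> space \<tau> \<in> sets (Omega_borel N A)"
      using measurable_sets[OF shift_meas B'] by (simp add: sp\<tau> space_Ob)
    have "measure \<tau> (shift -` B \<inter> space \<tau>) = (\<Sum>k<n. of_bool (xp k \<in> shift -` B \<inter> space \<tau>)) / real n"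
      by (rule meas_eq[OF SB])
    also have "(\<Sum>k<n. of_bool (xp k \<in> shift -` B \<inter> space \<tau>)) = (\<Sum>k<n. (of_bool (xp (Suc k) \<in> B) :: real))"
      using xpO by (intro sum.cong refl) (simp add: sp\<tau> shift_xp)
    also have "\<dots> = (\<Sum>k<n. of_bool (xp k \<in> B))"
      by (rule sum_rot) (simp add: xp_n)
    also have "\<dots> / real n = measure \<tau> B" by (rule meas_eq[OF B', symmetric])
    finally have mm: "measure \<tau> (shift -` B \<inter> space \<tau>) = measure \<tau> B" .
    interpret P: prob_space \<tau> by (rule prob)
    show ?thesis using mm by (simp add: P.emeasure_eq_measure)
  qed
  have erg: "measure \<tau> B = 0 \<or> measure \<tau> B = 1" if B: "B \<in> sets \<tau>" and BB: "shift -` B \<inter> space \<tau> = B" for B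
  proof -
    have B': "B \<in> sets (Omega_borel N A)" using B sets\<tau> by simp
    have step: "xp (Suc k) \<in> B \<longleftrightarrow> xp k \<in> B" for k
    proof -
      have "xp k \<in> B \<longleftrightarrow> xp k \<in> shift -` B \<inter> space \<tau>" using BB by simp
      also have "\<dots> \<longleftrightarrow> xp (Suc k) \<in> B" using xpO by (simp add: sp\<tau> shift_xp)
      finally show ?thesis by simp
    qed
    have allk: "xp k \<in> B \<longleftrightarrow> xp 0 \<in> B" for k
      by (induction k) (simp_all add: step)
    have "measure \<tau> B = (\<Sum>k<n. (of_bool (xp k \<in> B) :: real)) / real n"
      by (rule meas_eq[OF B'])
    also have "(\<Sum>k<n. (of_bool (xp k \<in> B) :: real)) = (\<Sum>k<n. (of_bool (xp 0 \<in> B) :: real))"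
      by (rule sum.cong[OF refl]) (subst allk, rule refl)
    also have "\<dots> = real n * of_bool (xp 0 \<in> B)" by simp
    also have "\<dots> / real n = of_bool (xp 0 \<in> B)" using n0 by simp
    finally show ?thesis by auto
  qed
  have tin: "\<tau> \<in> inv_erg_measures N A"
    unfolding inv_erg_measures_def using sets\<tau> prob inv erg by blast
  have "(\<integral>x. u (x 0) \<partial>\<tau>) = (\<integral>k. u (xp k 0) \<partial>M)"
    unfolding \<tau>_def by (rule integral_distr[OF meas coord_meas])
  also have "\<dots> = (\<Sum>k<n. u (xp k 0)) / real (card {..<n})"
    unfolding M_def by (rule integral_pmf_of_set[OF fin(2) fin(1)])
  also have "\<dots> = (\<Sum>i<length w. u (w ! i)) / real (length w)"
    by (simp add: xp_def n_def)
  finally show ?thesis using tin by blast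
qed

lemma int_F:
  assumes t: "\<tau> \<in> inv_erg_measures N A" and lam_pos: "lam > 0"
    and u_pos: "\<forall>i\<in>{1..N}. u i > 0"
  shows "(\<integral>x. F_A A lam u x \<partial>\<tau>) = (1 - 1 / lam) * (\<integral>x. u (x 0) \<partial>\<tau>)"
proof -
  have sp: "space \<tau> = Omega N A" by (rule iem_space[OF t])
  have eq: "F_A A lam u x = u (x 0) - (1 / lam) * u (x 1)" if "x \<in> space \<tau>" for x
  proof -
    have "x \<in> Omega N A" using that sp by simp
    hence "A (x 0) (x 1) = 1" "x 0 \<in> {1..N}" by (auto simp: Omega_def)
    hence "u (x 0) > 0" "A (x 0) (x 1) = 1" using u_pos by auto
    thus ?thesis using lam_pos by (simp add: F_A_def Pmat_def field_simps)
  qed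
  have I0: "integrable \<tau> (\<lambda>x. u (x 0))" using coord_integral[OF t] by blast
  have I1: "integrable \<tau> (\<lambda>x. (1 / lam) * u (x 1))"
    using coord_integral[OF t, of u 1] by (intro integrable_mult_right) blast
  have "(\<integral>x. F_A A lam u x \<partial>\<tau>) = (\<integral>x. u (x 0) - (1 / lam) * u (x 1) \<partial>\<tau>)"
    by (rule Bochner_Integration.integral_cong[OF refl]) (rule eq)
  also have "\<dots> = (\<integral>x. u (x 0) \<partial>\<tau>) - (\<integral>x. (1 / lam) * u (x 1) \<partial>\<tau>)"
    by (rule Bochner_Integration.integral_diff[OF I0 I1])
  also have "(\<integral>x. (1 / lam) * u (x 1) \<partial>\<tau>) = (1 / lam) * (\<integral>x. u (x (Suc 0)) \<partial>\<tau>)"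
    by simp
  also have "(\<integral>x. u (x (Suc 0)) \<partial>\<tau>) = (\<integral>x. u (x 0) \<partial>\<tau>)"
    by (rule coord_integral_shift[OF t])
  finally show ?thesis by (simp add: algebra_simps)
qed

lemma int_c:
  assumes t: "\<tau> \<in> inv_erg_measures N A"
    and h: "\<forall>i\<in>{1..N}. \<forall>j\<in>{1..N}. A i j = 1 \<longrightarrow> u i - c = h j - h i"
  shows "(\<integral>x. u (x 0) \<partial>\<tau>) = (c::real)"
proof -
  interpret prob_space \<tau> using iem_prob[OF t] .
  have sp: "space \<tau> = Omega N A" by (rule iem_space[OF t])
  have eq: "u (x 0) = c + (h (x 1) - h (x 0))" if "x \<in> space \<tau>" for x
  proof -
    have "x \<in> Omega N A" using that sp by simp
    hence "A (x 0) (x 1) = 1" "x 0 \<in> {1..N}" "x 1 \<in> {1..N}" by (auto simp: Omega_def)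
    thus ?thesis using h by force
  qed
  have H0: "integrable \<tau> (\<lambda>x. h (x 0))" using coord_integral[OF t] by blast
  have H1: "integrable \<tau> (\<lambda>x. h (x 1))" using coord_integral[OF t] by blast
  have "(\<integral>x. u (x 0) \<partial>\<tau>) = (\<integral>x. c + (h (x 1) - h (x 0)) \<partial>\<tau>)"
    by (rule Bochner_Integration.integral_cong[OF refl]) (rule eq)
  also have "\<dots> = (\<integral>x. c \<partial>\<tau>) + (\<integral>x. h (x 1) - h (x 0) \<partial>\<tau>)"
    by (rule Bochner_Integration.integral_add, simp, rule Bochner_Integration.integrable_diff[OF H1 H0])
  also have "(\<integral>x. h (x 1) - h (x 0) \<partial>\<tau>) = (\<integral>x. h (x (Suc 0)) \<partial>\<tau>) - (\<integral>x. h (x 0) \<partial>\<tau>)"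
    using H0 H1 by (simp add: Bochner_Integration.integral_diff)
  also have "(\<integral>x. h (x (Suc 0)) \<partial>\<tau>) = (\<integral>x. h (x 0) \<partial>\<tau>)"
    by (rule coord_integral_shift[OF t])
  finally show ?thesis by (simp add: prob_space)
qed

lemma F_Omega:
  assumes "x \<in> Omega N A" "lam > 0" "\<forall>i\<in>{1..N}. u i > 0"
  shows "F_A A lam u x = u (x 0) - u (x 1) / lam"
proof -
  have "A (x 0) (x 1) = 1" "x 0 \<in> {1..N}" using assms(1) by (auto simp: Omega_def)
  hence "u (x 0) > 0" "A (x 0) (x 1) = 1" using assms(3) by auto
  thus ?thesis using assms(2) by (simp add: F_A_def Pmat_def field_simps)
qed

lemma walk_butlast:
  assumes "walk N A w" "length w \<ge> 2"
  shows "walk N A (butlast w) \<and> A (last (butlast w)) (last w) = 1 \<and> butlast w \<noteq> [] \<and> hd (butlast w) = hd w"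
proof -
  have ne: "butlast w \<noteq> []" using assms by (cases w) auto
  moreover have "w = butlast w @ [last w]" using walk_ne[OF assms(1)] by simp
  ultimately have "walk N A (butlast w) \<and> A (last (butlast w)) (last w) = 1" using assms(1) walk_snoc by metis
  moreover have "hd (butlast w) = hd w" using assms(2) by (cases w; cases "tl w") auto
  ultimately show ?thesis using ne by blast
qed

lemma walk_sum_const:
  assumes "walk N A w" "\<forall>i\<in>{1..N}. u i = (a::real)"
  shows "(\<Sum>i<length w. u (w ! i)) = real (length w) * a"
proof -
  have "(\<Sum>i<length w. u (w ! i)) = (\<Sum>i<length w. a)"
  proof (rule sum.cong[OF refl])
    fix i assume "i \<in> {..<length w}"
    hence "w ! i \<in> set w" by simp
    thus "u (w ! i) = a" using walk_set[OF assms(1)] assms(2) by blast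
  qed
  thus ?thesis by simp
qed

theorem proposition3p3:
  fixes N :: nat and A :: "nat \<Rightarrow> nat \<Rightarrow> real"
    and lam :: real and u v :: "nat \<Rightarrow> real"
  assumes A01: "zero_one_matrix N A"
    and prim: "primitive N A"
    and lam_pos: "lam > 0"
    and u_pos: "\<forall>i\<in>{1..N}. u i > 0"
    and u_eig: "\<forall>i\<in>{1..N}. (\<Sum>j\<in>{1..N}. A i j * u j) = lam * u i"
    and u_norm: "(\<Sum>i\<in>{1..N}. u i) = 1"
    and v_pos: "\<forall>i\<in>{1..N}. v i > 0"
    and v_eig: "\<forall>j\<in>{1..N}. (\<Sum>i\<in>{1..N}. A i j * v i) = lam * v j"
    and uv_norm: "(\<Sum>i\<in>{1..N}. u i * v i) = 1"
  shows "((\<forall>\<tau>1\<in>inv_erg_measures N A. \<forall>\<tau>2\<in>inv_erg_measures N A.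
             (\<integral>x. F_A A lam u x \<partial>\<tau>1) = (\<integral>x. F_A A lam u x \<partial>\<tau>2))
          \<longleftrightarrow> (\<exists>c>0. cycle_avg_const N A u c))
     \<and> (\<forall>c>0. cycle_avg_const N A u c \<longrightarrow> c = (\<Sum>i\<in>{1..N}. (u i * v i) * u i))
     \<and> ((\<exists>C. \<forall>x\<in>Omega N A. F_A A lam u x = C)
          \<longleftrightarrow> (\<exists>r. \<forall>i\<in>{1..N}. (\<Sum>j\<in>{1..N}. A i j) = r))"
proof -
  have N1: "1 \<le> N"
  proof (rule ccontr)
    assume "\<not> 1 \<le> N" hence "N = 0" by simp
    thus False using u_norm by simp
  qed
  have one: "1 \<in> {1..N}" using N1 by simp
  obtain k where k: "k > 0" and wk: "\<And>i j. i\<in>{1..N} \<Longrightarrow> j\<in>{1..N} \<Longrightarrow>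
      \<exists>w. walk N A w \<and> hd w = i \<and> last w = j \<and> length w = Suc k"
    using walks_exist[OF A01 prim] by metis
  have A01': "A i j = 0 \<or> A i j = 1" if "i \<in> {1..N}" "j \<in> {1..N}" for i j
    using A01 that unfolding zero_one_matrix_def by blast
  have edge_le: "u j \<le> lam * u i" if ij: "i \<in> {1..N}" "j \<in> {1..N}" "A i j = 1" for i j
  proof -
    have "A i j * u j \<le> (\<Sum>l\<in>{1..N}. A i l * u l)"
    proof (rule member_le_sum[OF ij(2)])
      fix l assume "l \<in> {1..N} - {j}"
      hence "l \<in> {1..N}" by simp
      thus "0 \<le> A i l * u l" using A01'[OF ij(1)] u_pos by (metis less_imp_le mult_eq_0_iff mult_pos_pos zero_less_one order_refl)
    qed simp
    thus ?thesis using u_eig ij by simp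
  qed
  obtain w1 where w1: "walk N A w1" "hd w1 = 1" "last w1 = 1" "length w1 = Suc k"
    using wk[OF one one] by blast
  define w0 where "w0 = butlast w1"
  have w0: "walk N A w0" "A (last w0) (hd w0) = 1" "w0 \<noteq> []"
    using walk_butlast[OF w1(1)] w1 k by (auto simp: w0_def)
  define avg where "avg w = (\<Sum>i<length w. u (w ! i)) / real (length w)" for w
  have avg_eq: "(1 / real (length w)) * (\<Sum>i<length w. u (w ! i)) = avg w" for w
    by (simp add: avg_def)
  have avg_pos: "avg w > 0" if "walk N A w" for w
  proof -
    have ne: "w \<noteq> []" using that by auto
    have "(\<Sum>i<length w. u (w ! i)) > 0"
    proof (rule sum_pos)
      show "finite {..<length w}" by simp
      have "0 \<in> {..<length w}" using ne by simp
      thus "{..<length w} \<noteq> {}" by blast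
      fix i assume "i \<in> {..<length w}"
      hence "w ! i \<in> set w" by simp
      thus "u (w ! i) > 0" using walk_set[OF that] u_pos by blast
    qed
    thus ?thesis using ne by (simp add: avg_def)
  qed
  have cac_iff: "cycle_avg_const N A u c \<longleftrightarrow> (\<forall>w. walk N A w \<and> A (last w) (hd w) = 1 \<longrightarrow> avg w = c)" for c
  proof
    assume H: "cycle_avg_const N A u c"
    show "\<forall>w. walk N A w \<and> A (last w) (hd w) = 1 \<longrightarrow> avg w = c"
    proof (intro allI impI)
      fix w assume w: "walk N A w \<and> A (last w) (hd w) = 1"
      have "length w \<ge> 1" using w by (cases w) auto
      thus "avg w = c" using H w walk_words[of N A w] avg_eq[of w] unfolding cycle_avg_const_def by metis
    qed
  next
    assume H: "\<forall>w. walk N A w \<and> A (last w) (hd w) = 1 \<longrightarrow> avg w = c"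
    show "cycle_avg_const N A u c" unfolding cycle_avg_const_def
    proof (intro allI impI ballI)
      fix n \<gamma> assume n: "n \<ge> 1" and g: "\<gamma> \<in> words N A n" and cl: "A (last \<gamma>) (hd \<gamma>) = 1"
      have ln: "length \<gamma> = n" using g by (simp add: words_def)
      have "walk N A \<gamma>" by (rule words_walk[OF n g])
      hence "avg \<gamma> = c" using H cl by blast
      thus "1 / real n * (\<Sum>i<n. u (\<gamma> ! i)) = c" using avg_eq[of \<gamma>] ln by simp
    qed
  qed
  have part2: "c = (\<Sum>i\<in>{1..N}. (u i * v i) * u i)" if c: "cycle_avg_const N A u c" for c
  proof -
    obtain h where h: "\<forall>i\<in>{1..N}. \<forall>j\<in>{1..N}. A i j = 1 \<longrightarrow> u i - c = h j - h i"
      using potential[OF A01 prim c N1] by blast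
    show ?thesis by (rule part2[OF A01 h lam_pos u_eig v_eig uv_norm])
  qed
  have P1: "(\<forall>\<tau>1\<in>inv_erg_measures N A. \<forall>\<tau>2\<in>inv_erg_measures N A.
             (\<integral>x. F_A A lam u x \<partial>\<tau>1) = (\<integral>x. F_A A lam u x \<partial>\<tau>2))
          \<longleftrightarrow> (\<exists>c>0. cycle_avg_const N A u c)"
  proof
    assume EQ: "\<forall>\<tau>1\<in>inv_erg_measures N A. \<forall>\<tau>2\<in>inv_erg_measures N A.
             (\<integral>x. F_A A lam u x \<partial>\<tau>1) = (\<integral>x. F_A A lam u x \<partial>\<tau>2)"
    obtain \<tau>0 where t0: "\<tau>0 \<in> inv_erg_measures N A" "(\<integral>x. u (x 0) \<partial>\<tau>0) = avg w0"
      using periodic_measure[OF w0(1,2), of u] unfolding avg_def by blast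
    have "cycle_avg_const N A u (avg w0)"
      unfolding cac_iff
    proof (intro allI impI)
      fix w assume w: "walk N A w \<and> A (last w) (hd w) = 1"
      obtain \<tau> where t: "\<tau> \<in> inv_erg_measures N A" "(\<integral>x. u (x 0) \<partial>\<tau>) = avg w"
        using periodic_measure[of N A w u] w unfolding avg_def by blast
      have FF: "(1 - 1 / lam) * avg w = (1 - 1 / lam) * avg w0"
        using EQ t t0 int_F[OF t(1) lam_pos u_pos] int_F[OF t0(1) lam_pos u_pos] by metis
      show "avg w = avg w0"
      proof (cases "lam = 1")
        case False
        hence "1 - 1 / lam \<noteq> 0" using lam_pos by (simp add: field_simps)
        thus ?thesis using FF False lam_pos by simp
      next
        case True
        have const: "u i = u 1" if i: "i \<in> {1..N}" for i
        proof -
          obtain p where p: "walk N A p" "hd p = i" "last p = 1" "length p = Suc k" using wk[OF i one] by blast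
          obtain q where q: "walk N A q" "hd q = 1" "last q = i" "length q = Suc k" using wk[OF one i] by blast
          have mono1: "u b \<le> u a" if "a \<in> {1..N}" "b \<in> {1..N}" "A a b = 1" for a b
            using edge_le[OF that] True by simp
          have "u (last p) \<le> u i"
          proof (rule walk_prop[OF p(1), where P="\<lambda>t. u t \<le> u i"])
            show "u (hd p) \<le> u i" using p by simp
          next
            fix a b assume "a \<in> {1..N}" "b \<in> {1..N}" "A a b = 1" "u a \<le> u i"
            thus "u b \<le> u i" using mono1[of a b] by linarith
          qed
          moreover have "u (last q) \<le> u 1"
          proof (rule walk_prop[OF q(1), where P="\<lambda>t. u t \<le> u 1"])
            show "u (hd q) \<le> u 1" using q by simp
          next
            fix a b assume "a \<in> {1..N}" "b \<in> {1..N}" "A a b = 1" "u a \<le> u 1"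
            thus "u b \<le> u 1" using mono1[of a b] by linarith
          qed
          ultimately show ?thesis using p q by simp
        qed
        define a where "a = u 1"
        have cst: "\<forall>i\<in>{1..N}. u i = a" unfolding a_def using const by blast
        have "avg w = a"
        proof -
          have S: "(\<Sum>i<length w. u (w ! i)) = real (length w) * a"
            using walk_sum_const[OF _ cst] w by blast
          have "length w > 0" using w by (cases w) auto
          thus ?thesis using S by (simp add: avg_def)
        qed
        moreover have "avg w0 = a"
        proof -
          have S: "(\<Sum>i<length w0. u (w0 ! i)) = real (length w0) * a"
            using walk_sum_const[OF _ cst] w0 by blast
          have "length w0 > 0" using w0 by (cases w0) auto
          thus ?thesis using S by (simp add: avg_def)
        qed
        ultimately show ?thesis by simp
      qed
    qed
    thus "\<exists>c>0. cycle_avg_const N A u c" using avg_pos[OF w0(1)] by blast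
  next
    assume "\<exists>c>0. cycle_avg_const N A u c"
    then obtain c where c: "cycle_avg_const N A u c" by blast
    obtain h where h: "\<forall>i\<in>{1..N}. \<forall>j\<in>{1..N}. A i j = 1 \<longrightarrow> u i - c = h j - h i"
      using potential[OF A01 prim c N1] by blast
    have "(\<integral>x. F_A A lam u x \<partial>\<tau>) = (1 - 1 / lam) * c" if t: "\<tau> \<in> inv_erg_measures N A" for \<tau>
      using int_F[OF t lam_pos u_pos] int_c[OF t h] by simp
    thus "\<forall>\<tau>1\<in>inv_erg_measures N A. \<forall>\<tau>2\<in>inv_erg_measures N A.
             (\<integral>x. F_A A lam u x \<partial>\<tau>1) = (\<integral>x. F_A A lam u x \<partial>\<tau>2)" by simp
  qed
  have succ: "\<exists>j\<in>{1..N}. A i j = 1" if i: "i \<in> {1..N}" for i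
  proof -
    obtain p where p: "walk N A p" "hd p = i" "last p = 1" "length p = Suc k" using wk[OF i one] by blast
    then obtain a b r where "p = a # b # r" using k by (cases p; cases "tl p") auto
    thus ?thesis using p walk_hd[of N A "b # r"] by auto
  qed
  have P3: "(\<exists>C. \<forall>x\<in>Omega N A. F_A A lam u x = C)
          \<longleftrightarrow> (\<exists>r. \<forall>i\<in>{1..N}. (\<Sum>j\<in>{1..N}. A i j) = r)"
  proof
    assume "\<exists>C. \<forall>x\<in>Omega N A. F_A A lam u x = C"
    then obtain C where C: "\<forall>x\<in>Omega N A. F_A A lam u x = C" by blast
    define s where "s i = (SOME j. j \<in> {1..N} \<and> A i j = 1)" for i
    have s: "s i \<in> {1..N} \<and> A i (s i) = 1" if "i \<in> {1..N}" for i
      unfolding s_def using someI_ex[OF succ[OF that, unfolded Bex_def]] .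
    have sit: "(s ^^ m) j \<in> {1..N}" if "j \<in> {1..N}" for j m
    proof (induction m)
      case 0 thus ?case using that by simp
    next
      case (Suc m)
      thus ?case using s[OF Suc] by simp
    qed
    define T where "T t = lam * (t - C)" for t
    have eT: "u j = T (u i)" if ij: "i \<in> {1..N}" "j \<in> {1..N}" "A i j = 1" for i j
    proof -
      define x where "x m = (if m = 0 then i else (s ^^ (m - 1)) j)" for m
      have "x \<in> Omega N A"
        unfolding Omega_def
      proof (intro CollectI conjI allI)
        fix m show "x m \<in> {1..N}" using ij sit by (simp add: x_def)
        show "A (x m) (x (Suc m)) = 1"
        proof (cases m)
          case 0 thus ?thesis using ij by (simp add: x_def)
        next
          case (Suc m') thus ?thesis using s sit ij by (simp add: x_def)
        qed
      qed
      hence "F_A A lam u x = C" using C by blast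
      moreover have "F_A A lam u x = u i - u j / lam"
        using F_Omega[OF \<open>x \<in> Omega N A\<close> lam_pos u_pos] by (simp add: x_def)
      ultimately show ?thesis using lam_pos by (simp add: T_def field_simps)
    qed
    have Tk: "u j = (T ^^ k) (u i)" if ij: "i \<in> {1..N}" "j \<in> {1..N}" for i j
    proof -
      obtain p where p: "walk N A p" "hd p = i" "last p = j" "length p = Suc k" using wk[OF ij] by blast
      show ?thesis using walk_iter[OF p(1), of u T] eT p by simp
    qed
    have injT: "inj (T ^^ k)"
      by (rule inj_fn) (use lam_pos in \<open>auto simp: inj_def T_def\<close>)
    have const: "u i = u 1" if i: "i \<in> {1..N}" for i
      using Tk[OF i one] Tk[OF one one] injT by (metis injD)
    define a where "a = u 1"
    have cst: "u i = a" if "i \<in> {1..N}" for i unfolding a_def using const[OF that] .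
    have apos: "a > 0" unfolding a_def using u_pos one by blast
    have "(\<Sum>j\<in>{1..N}. A i j) = lam" if i: "i \<in> {1..N}" for i
    proof -
      have "lam * a = (\<Sum>j\<in>{1..N}. A i j * u j)" using u_eig i cst[OF i] by simp
      also have "\<dots> = (\<Sum>j\<in>{1..N}. A i j * a)" by (rule sum.cong[OF refl]) (simp add: cst)
      also have "\<dots> = (\<Sum>j\<in>{1..N}. A i j) * a" by (simp add: sum_distrib_right)
      finally show ?thesis using apos by simp
    qed
    thus "\<exists>r. \<forall>i\<in>{1..N}. (\<Sum>j\<in>{1..N}. A i j) = r" by blast
  next
    assume "\<exists>r. \<forall>i\<in>{1..N}. (\<Sum>j\<in>{1..N}. A i j) = r"
    then obtain r where r: "\<forall>i\<in>{1..N}. (\<Sum>j\<in>{1..N}. A i j) = r" by blast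
    have "lam * (\<Sum>j\<in>{1..N}. v j) = r * (\<Sum>j\<in>{1..N}. v j)"
    proof -
      have "lam * (\<Sum>j\<in>{1..N}. v j) = (\<Sum>j\<in>{1..N}. \<Sum>i\<in>{1..N}. A i j * v i)"
        using v_eig by (simp add: sum_distrib_left)
      also have "\<dots> = (\<Sum>i\<in>{1..N}. v i * (\<Sum>j\<in>{1..N}. A i j))"
        by (subst sum.swap) (simp add: sum_distrib_left mult_ac)
      also have "\<dots> = r * (\<Sum>j\<in>{1..N}. v j)"
        using r by (simp add: sum_distrib_left mult_ac)
      finally show ?thesis .
    qed
    moreover have "(\<Sum>j\<in>{1..N}. v j) > 0" using v_pos one by (intro sum_pos) auto
    ultimately have lr: "lam = r" by simp
    define Mx where "Mx = Max (u ` {1..N})"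
    have Mge: "u i \<le> Mx" if "i \<in> {1..N}" for i using that by (simp add: Mx_def)
    have "Mx \<in> u ` {1..N}" unfolding Mx_def by (rule Max_in) (use one in auto)
    then obtain i0 where i0: "i0 \<in> {1..N}" "u i0 = Mx" by (metis imageE)
    have propM: "u j = Mx" if ij: "i \<in> {1..N}" "j \<in> {1..N}" "A i j = 1" "u i = Mx" for i j
    proof -
      have "(\<Sum>l\<in>{1..N}. A i l * (Mx - u l)) = (\<Sum>l\<in>{1..N}. A i l) * Mx - (\<Sum>l\<in>{1..N}. A i l * u l)"
        by (simp add: sum_subtractf right_diff_distrib sum_distrib_right)
      also have "\<dots> = 0" using r u_eig ij lr by simp
      finally have S0: "(\<Sum>l\<in>{1..N}. A i l * (Mx - u l)) = 0" .
      have nn: "\<forall>l\<in>{1..N}. 0 \<le> A i l * (Mx - u l)"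
      proof
        fix l assume l: "l \<in> {1..N}"
        show "0 \<le> A i l * (Mx - u l)" using A01'[OF ij(1) l] Mge[OF l] by auto
      qed
      have "A i j * (Mx - u j) = 0" using sum_nonneg_eq_0_iff[of "{1..N}" "\<lambda>l. A i l * (Mx - u l)"] S0 nn ij(2) by simp
      thus ?thesis using ij(3) by simp
    qed
    have const: "u j = Mx" if j: "j \<in> {1..N}" for j
    proof -
      obtain p where p: "walk N A p" "hd p = i0" "last p = j" "length p = Suc k" using wk[OF i0(1) j] by blast
      have "u (last p) = Mx"
        by (rule walk_prop[OF p(1), where P="\<lambda>t. u t = Mx"]) (use p i0 propM in auto)
      thus ?thesis using p by simp
    qed
    have "\<forall>x\<in>Omega N A. F_A A lam u x = Mx - Mx / lam"
    proof
      fix x assume x: "x \<in> Omega N A"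
      hence "x 0 \<in> {1..N}" "x 1 \<in> {1..N}" by (auto simp: Omega_def)
      thus "F_A A lam u x = Mx - Mx / lam" using F_Omega[OF x lam_pos u_pos] const by simp
    qed
    thus "\<exists>C. \<forall>x\<in>Omega N A. F_A A lam u x = C" by blast
  qed
  show ?thesis using P1 part2 P3 by blast
qed

end
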